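(* A permutation $\pi\in\mathcal{S}_n$ is a Schröder permutation (i.e. avoids both $1243$ and $2143$) if and only if every element $(i,j)$ of its essential set $\mathcal{E}(\pi)$ has rank $\rho(i,j)\le 1$.
   Context: For $\pi=\pi_1\cdots\pi_n\in\mathcal{S}_n$ and $\tau\in\mathcal{S}_k$, $\pi$ contains the pattern $\tau$ if there are indices $i_1<\dots<i_k$ with $\pi_{i_1}\cdots\pi_{i_k}$ in the same relative order as $\tau_1\cdots\tau_k$; otherwise $\pi$ avoids $\tau$. Represent $\pi$ by an $n\times n$ array, rows $i=1,\dots,n$ numbered top to bottom and columns $j=1,\dots,n$ left to right, with a dot in square $(i,\pi_i)$. The diagram $D(\pi)$ is the set of squares $(i,j)$ with $\pi_i>j$ and $\pi^{-1}(j)>i$. The essential set $\mathcal{E}(\pi)$ is the set of squares $(i,j)\in D(\pi)$ such that $(i+1,j)\notin D(\pi)$ and $(i,j+1)\notin D(\pi)$ (squares outside the array count as not in $D(\pi)$). The rank of a square $(i,j)$ is $\rho(i,j)=\#\{k<i:\pi_k<j\}$, the number of dots strictly northwest of it. *)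

theory Defs
  imports "HOL-Combinatorics.Permutations"
begin

text \<open>Permutations of [n] = {1..n} are functions p :: nat => nat with p permutes {1..n};
  p i is the entry pi_i. Patterns tau in S_k are likewise functions with tau permutes {1..k}.\<close>

definition contains_pattern :: "nat \<Rightarrow> (nat \<Rightarrow> nat) \<Rightarrow> nat \<Rightarrow> (nat \<Rightarrow> nat) \<Rightarrow> bool" where
  "contains_pattern n p k tau \<longleftrightarrow>
     (\<exists>idx :: nat \<Rightarrow> nat.
        (\<forall>a\<in>{1..k}. idx a \<in> {1..n}) \<and>
        (\<forall>a\<in>{1..k}. \<forall>b\<in>{1..k}. a < b \<longrightarrow> idx a < idx b) \<and>
        (\<forall>a\<in>{1..k}. \<forall>b\<in>{1..k}. p (idx a) < p (idx b) \<longleftrightarrow> tau a < tau b))"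

definition avoids_pattern :: "nat \<Rightarrow> (nat \<Rightarrow> nat) \<Rightarrow> nat \<Rightarrow> (nat \<Rightarrow> nat) \<Rightarrow> bool" where
  "avoids_pattern n p k tau \<longleftrightarrow> \<not> contains_pattern n p k tau"

definition perm_of_list :: "nat list \<Rightarrow> nat \<Rightarrow> nat" where
  "perm_of_list xs i = (if 1 \<le> i \<and> i \<le> length xs then xs ! (i - 1) else i)"

definition pat1243 :: "nat \<Rightarrow> nat" where "pat1243 = perm_of_list [1,2,4,3]"
definition pat2143 :: "nat \<Rightarrow> nat" where "pat2143 = perm_of_list [2,1,4,3]"

definition schroeder_perm :: "nat \<Rightarrow> (nat \<Rightarrow> nat) \<Rightarrow> bool" where
  "schroeder_perm n p \<longleftrightarrow> avoids_pattern n p 4 pat1243 \<and> avoids_pattern n p 4 pat2143"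

definition diagram :: "nat \<Rightarrow> (nat \<Rightarrow> nat) \<Rightarrow> (nat \<times> nat) set" where
  "diagram n p = {(i, j). i \<in> {1..n} \<and> j \<in> {1..n} \<and> p i > j \<and> inv p j > i}"

definition essential_set :: "nat \<Rightarrow> (nat \<Rightarrow> nat) \<Rightarrow> (nat \<times> nat) set" where
  "essential_set n p = {(i, j). (i, j) \<in> diagram n p \<and> (i + 1, j) \<notin> diagram n p
                                \<and> (i, j + 1) \<notin> diagram n p}"

definition rank :: "(nat \<Rightarrow> nat) \<Rightarrow> nat \<Rightarrow> nat \<Rightarrow> nat" where
  "rank p i j = card {k. 1 \<le> k \<and> k < i \<and> p k < j}"

end

theory Submission
  imports Defs
begin

lemma pat_vals:
  "pat1243 (Suc 0) = 1" "pat1243 1 = 1" "pat1243 2 = 2" "pat1243 3 = 4" "pat1243 4 = 3"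
  "pat2143 (Suc 0) = 2" "pat2143 1 = 2" "pat2143 2 = 1" "pat2143 3 = 4" "pat2143 4 = 3"
  by (simp_all add: pat1243_def pat2143_def perm_of_list_def)

lemma four_set: "{1..4::nat} = {1,2,3,4}" by auto

lemma rank_mono:
  assumes "i \<le> i'" "j \<le> j'"
  shows "rank p i j \<le> rank p i' j'"
  unfolding rank_def
  by (rule card_mono) (use assms in auto)

lemma rank_ge2_pattern:
  assumes perm: "p permutes {1..n}" and D: "(i, j) \<in> diagram n p" and R: "rank p i j \<ge> 2"
  shows "\<not> schroeder_perm n p"
proof -
  define S where "S = {k. 1 \<le> k \<and> k < i \<and> p k < j}"
  have "card S \<ge> 2" using R by (simp add: rank_def S_def)
  then obtain a b where ab: "a \<in> S" "b \<in> S" "a < b"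
  proof -
    assume H: "\<And>a b. a \<in> S \<Longrightarrow> b \<in> S \<Longrightarrow> a < b \<Longrightarrow> thesis"
    from \<open>card S \<ge> 2\<close> obtain x y where "x \<in> S" "y \<in> S" "x \<noteq> y"
      by (metis One_nat_def Suc_1 card_le_Suc_iff not_less_eq_eq insertCI less_Suc0 nat_le_linear)
    then show thesis using H by (metis linorder_neqE_nat)
  qed
  have iin: "1 \<le> i" "i \<le> n" "j \<in> {1..n}" "p i > j" "inv p j > i" using D by (auto simp: diagram_def)
  define d where "d = inv p j"
  have pd: "p d = j" unfolding d_def using perm by (meson permutes_inverses(1))
  have dn: "d \<in> {1..n}" unfolding d_def using perm iin(3)
    by (meson permutes_in_image permutes_inv)
  have id: "i < d" using iin d_def by simp
  define idx where "idx = (\<lambda>x::nat. if x = 1 then a else if x = 2 then b else if x = 3 then i else d)"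
  have i1: "idx 1 = a" "idx 2 = b" "idx 3 = i" "idx 4 = d" by (simp_all add: idx_def)
  have ainfo: "1 \<le> a" "a < i" "p a < j" "1 \<le> b" "b < i" "p b < j" using ab by (auto simp: S_def)
  have common1: "\<forall>x\<in>{1..4}. idx x \<in> {1..n}"
    unfolding four_set using ainfo iin dn id ab by (auto simp: idx_def)
  have common2: "\<forall>x\<in>{1..4}. \<forall>y\<in>{1..4}. x < y \<longrightarrow> idx x < idx y"
    unfolding four_set using ainfo iin dn id ab by (auto simp: idx_def)
  show ?thesis
  proof (cases "p a < p b")
    case True
    have "contains_pattern n p 4 pat1243"
      unfolding contains_pattern_def
      apply (rule exI[of _ idx])
      using common1 common2 True ainfo iin pd unfolding four_set
      by (auto simp: idx_def pat_vals)
    then show ?thesis by (simp add: schroeder_perm_def avoids_pattern_def)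
  next
    case False
    have "p a \<noteq> p b" using perm ab(3) by (metis permutes_inj injD less_irrefl)
    with False have F: "p b < p a" by simp
    have "contains_pattern n p 4 pat2143"
      unfolding contains_pattern_def
      apply (rule exI[of _ idx])
      using common1 common2 F ainfo iin pd unfolding four_set
      by (auto simp: idx_def pat_vals)
    then show ?thesis by (simp add: schroeder_perm_def avoids_pattern_def)
  qed
qed

lemma pattern_rank_ge2:
  assumes perm: "p permutes {1..n}" and NS: "\<not> schroeder_perm n p"
  shows "\<exists>i j. (i, j) \<in> diagram n p \<and> rank p i j \<ge> 2"
proof -
  from NS obtain tau where tau: "tau = pat1243 \<or> tau = pat2143" and C: "contains_pattern n p 4 tau"
    by (auto simp: schroeder_perm_def avoids_pattern_def)
  from C obtain idx where
    h1: "\<forall>a\<in>{1..4}. idx a \<in> {1..n}" and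
    h2: "\<forall>a\<in>{1..4}. \<forall>b\<in>{1..4}. a < b \<longrightarrow> idx a < idx b" and
    h3: "\<forall>a\<in>{1..4}. \<forall>b\<in>{1..4}. p (idx a) < p (idx b) \<longleftrightarrow> tau a < tau b"
    unfolding contains_pattern_def by blast
  define a b c d where abcd_defs: "a = idx 1" "b = idx 2" "c = idx 3" "d = idx 4"
  have pos: "1 \<le> a" "a < b" "b < c" "c < d" "d \<le> n" "1 \<le> c" "c \<le> n"
    using h1[rule_format, of 1] h1[rule_format, of 3] h1[rule_format, of 4]
      h2[rule_format, of 1 2] h2[rule_format, of 2 3] h2[rule_format, of 3 4]
    unfolding abcd_defs by auto
  have t: "tau 1 < tau 4" "tau 2 < tau 4" "tau 4 < tau 3" using tau by (auto simp: pat_vals)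
  have vals: "p a < p d" "p b < p d" "p d < p c"
    using h3[rule_format, of 1 4] h3[rule_format, of 2 4] h3[rule_format, of 4 3] t
    unfolding abcd_defs by auto
  have "d \<in> {1..n}" using pos by simp
  then have pdn: "p d \<in> {1..n}" using perm by (meson permutes_in_image)
  have inv: "inv p (p d) = d" using perm by (meson permutes_inverses(2))
  have D: "(c, p d) \<in> diagram n p"
    using pos pdn vals inv by (auto simp: diagram_def)
  have "{a, b} \<subseteq> {k. 1 \<le> k \<and> k < c \<and> p k < p d}" using pos vals by auto
  moreover have "finite {k. 1 \<le> k \<and> k < c \<and> p k < p d}" by simp
  ultimately have "card {a, b} \<le> rank p c (p d)" unfolding rank_def by (rule card_mono[rotated])
  moreover have "card {a, b} = 2" using pos by simp
  ultimately show ?thesis using D by metis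
qed

lemma diagram_to_essential:
  assumes "(i, j) \<in> diagram n p"
  shows "\<exists>i' j'. (i', j') \<in> essential_set n p \<and> i \<le> i' \<and> j \<le> j'"
  using assms
proof (induction "2 * n - i - j" arbitrary: i j rule: less_induct)
  case less
  show ?case
  proof (cases "(i, j) \<in> essential_set n p")
    case True then show ?thesis by auto
  next
    case False
    have b: "i \<le> n" "j \<le> n" using less.prems by (auto simp: diagram_def)
    from False less.prems have "(i + 1, j) \<in> diagram n p \<or> (i, j + 1) \<in> diagram n p"
      by (auto simp: essential_set_def)
    then show ?thesis
    proof
      assume h: "(i + 1, j) \<in> diagram n p"
      then have "i + 1 \<le> n" by (auto simp: diagram_def)
      then have "2 * n - (i + 1) - j < 2 * n - i - j" using b by simp
      from less.hyps[OF this h] show ?thesis by force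
    next
      assume h: "(i, j + 1) \<in> diagram n p"
      then have "j + 1 \<le> n" by (auto simp: diagram_def)
      then have "2 * n - i - (j + 1) < 2 * n - i - j" using b by simp
      from less.hyps[OF this h] show ?thesis by force
    qed
  qed
qed

theorem theorem2p1:
  fixes n :: nat and p :: "nat \<Rightarrow> nat"
  assumes "p permutes {1..n}"
  shows "schroeder_perm n p \<longleftrightarrow> (\<forall>(i, j) \<in> essential_set n p. rank p i j \<le> 1)"
proof
  assume S: "schroeder_perm n p"
  show "\<forall>(i, j) \<in> essential_set n p. rank p i j \<le> 1"
  proof (clarify)
    fix i j assume "(i, j) \<in> essential_set n p"
    then have "(i, j) \<in> diagram n p" by (simp add: essential_set_def)
    with rank_ge2_pattern[OF assms] S show "rank p i j \<le> 1" by force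
  qed
next
  assume E: "\<forall>(i, j) \<in> essential_set n p. rank p i j \<le> 1"
  show "schroeder_perm n p"
  proof (rule ccontr)
    assume "\<not> schroeder_perm n p"
    then obtain i j where D: "(i, j) \<in> diagram n p" and R: "rank p i j \<ge> 2"
      using pattern_rank_ge2[OF assms] by blast
    obtain i' j' where "(i', j') \<in> essential_set n p" "i \<le> i'" "j \<le> j'"
      using diagram_to_essential[OF D] by blast
    moreover have "rank p i j \<le> rank p i' j'" using calculation by (simp add: rank_mono)
    ultimately show False using E R by fastforce
  qed
qed

end
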